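(* Let $K$ be an $\mathbb N$-valued random variable with $\Pr(K=k)=k^{-5/4}/c$ for $k\in\mathbb N$ ($c$ a normalizing constant), and let $(K_i)_{i\in\mathbb N}$ be i.i.d. copies of $K$. Then for almost every realization $(k_i)$ there is $i_0$ such that (1) every record-time $i\geq i_0$ is simple, and (2) $\max\{k_1,\ldots,k_i\}>i$ for all $i\geq i_0$.
   Context: For a sequence $(k_i)_{i\in\mathbb N}$ of natural numbers, $i$ is a record-time if $k_i>k_j$ for all $j<i$, and a non-strict record-time if $k_i\geq k_j$ for all $j<i$. A record-time $i$ is simple if $k_i<k_j$ for every non-strict record-time $j>i$. *)

theory Defs
  imports "HOL-Probability.Probability"
begin

(* Sequences are indexed from 0: k 0, k 1, k 2, ... ; the paper's k_1, k_2, ... *)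

definition record_time :: "(nat \<Rightarrow> nat) \<Rightarrow> nat \<Rightarrow> bool" where
  "record_time k i \<longleftrightarrow> (\<forall>j<i. k j < k i)"

definition nonstrict_record_time :: "(nat \<Rightarrow> nat) \<Rightarrow> nat \<Rightarrow> bool" where
  "nonstrict_record_time k i \<longleftrightarrow> (\<forall>j<i. k j \<le> k i)"

definition simple_record_time :: "(nat \<Rightarrow> nat) \<Rightarrow> nat \<Rightarrow> bool" where
  "simple_record_time k i \<longleftrightarrow> record_time k i \<and>
     (\<forall>j>i. nonstrict_record_time k j \<longrightarrow> k i < k j)"

definition zeta54 :: real where
  "zeta54 = (\<Sum>k. real (Suc k) powr (-5/4))"

end

theory Submission
  imports Defs
begin

lemma zeta_pos: "zeta54 > 0"
proof -
  have "summable (\<lambda>n. real n powr (-5/4))" by (simp add: summable_real_powr_iff)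
  hence "summable (\<lambda>n. real (Suc n) powr (-5/4))"
    using summable_Suc_iff[of "\<lambda>n. real n powr (-5/4)"] by blast
  thus ?thesis unfolding zeta54_def by (intro suminf_pos) auto
qed

lemma p_double: assumes "v \<ge> (1::nat)"
  shows "real (2 * v) powr (-5/4) \<ge> real v powr (-5/4) / 4"
proof -
  have "real (2 * v) powr (-5/4) = 2 powr (-5/4) * real v powr (-5/4)"
    by (simp add: powr_mult)
  moreover have "(2::real) powr (-5/4) \<ge> 2 powr (-2)" by (intro powr_mono) auto
  moreover have "(2::real) powr (-2) = 1/4" by (simp add: powr_minus powr_realpow)
  ultimately show ?thesis using assms by (simp add: mult_right_mono)
qed

lemma exp_bound: assumes "x > (0::real)" shows "exp (-x) \<le> 4 / x^2"
proof -
  have "exp x = exp (x/2) * exp (x/2)" by (simp flip: exp_add)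
  moreover have "exp (x/2) \<ge> x/2" using exp_ge_add_one_self[of "x/2"] by linarith
  ultimately have "exp x \<ge> (x/2)*(x/2)" using assms by (metis mult_mono less_imp_le exp_ge_zero half_gt_zero)
  hence "x^2/4 \<le> exp x" by (simp add: power2_eq_square)
  thus ?thesis using assms by (simp add: exp_minus field_simps)
qed

locale recs = prob_space M for M :: "'a measure" +
  fixes K :: "nat \<Rightarrow> 'a \<Rightarrow> nat"
  assumes ind: "indep_vars (\<lambda>_. count_space UNIV) K UNIV"
    and dist: "\<And>i k. k \<ge> 1 \<Longrightarrow> prob {\<omega> \<in> space M. K i \<omega> = k} = real k powr (-5/4) / zeta54"
begin

definition p :: "nat \<Rightarrow> real" where "p k = real k powr (-5/4) / zeta54"

lemma p_pos: "k \<ge> 1 \<Longrightarrow> p k > 0"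
  using zeta_pos by (simp add: p_def)

lemma p_nonneg: "p k \<ge> 0"
  using zeta_pos by (simp add: p_def)

lemma p_double': "v \<ge> 1 \<Longrightarrow> p (2 * v) \<ge> p v / 4"
proof -
  assume v: "v \<ge> 1"
  have "(real v powr (-5/4) / 4) / zeta54 \<le> real (2 * v) powr (-5/4) / zeta54"
    using p_double[OF v] zeta_pos by (intro divide_right_mono) auto
  thus ?thesis unfolding p_def by simp
qed

lemma p_mono: "1 \<le> k \<Longrightarrow> k \<le> m \<Longrightarrow> p m \<le> p k"
  unfolding p_def using zeta_pos
  by (intro divide_right_mono powr_mono2') auto

lemma rv[measurable]: "K i \<in> measurable M (count_space UNIV)"
  using ind unfolding indep_vars_def2 by auto

lemma ev: "{\<omega>\<in>space M. K l \<omega> \<in> S} \<in> events"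
proof -
  have "K l -` S \<inter> space M \<in> events" by (rule measurable_sets[OF rv]) auto
  moreover have "K l -` S \<inter> space M = {\<omega>\<in>space M. K l \<omega> \<in> S}" by auto
  ultimately show ?thesis by simp
qed

lemma indep_prod: assumes "finite J" "J \<noteq> {}"
  shows "prob {\<omega>\<in>space M. \<forall>l\<in>J. K l \<omega> \<in> E l} = (\<Prod>l\<in>J. prob {\<omega>\<in>space M. K l \<omega> \<in> E l})"
proof -
  have I: "indep_sets (\<lambda>i. {K i -` A \<inter> space M | A. A \<in> sets (count_space UNIV)}) UNIV"
    using ind unfolding indep_vars_def2 by auto
  have "prob (\<Inter>l\<in>J. K l -` E l \<inter> space M) = (\<Prod>l\<in>J. prob (K l -` E l \<inter> space M))"
    by (rule indep_setsD[OF I]) (use assms in auto)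
  moreover have "(\<Inter>l\<in>J. K l -` E l \<inter> space M) = {\<omega>\<in>space M. \<forall>l\<in>J. K l \<omega> \<in> E l}" using assms by auto
  moreover have "\<And>l. K l -` E l \<inter> space M = {\<omega>\<in>space M. K l \<omega> \<in> E l}" by auto
  ultimately show ?thesis by simp
qed

lemma tail: assumes "v \<ge> 1" "S \<inter> {v..<2 * v} = {}"
  shows "prob {\<omega>\<in>space M. K l \<omega> \<in> S} \<le> 1 - real v * p v / 4"
proof -
  let ?T = "{\<omega>\<in>space M. K l \<omega> \<in> {v..<2 * v}}"
  have "?T = (\<Union>k\<in>{v..<2 * v}. {\<omega>\<in>space M. K l \<omega> \<in> {k}})" by auto
  hence eq: "prob ?T = (\<Sum>k\<in>{v..<2 * v}. prob {\<omega>\<in>space M. K l \<omega> \<in> {k}})"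
    by (simp only:) (rule measure_finite_Union, auto simp: disjoint_family_on_def ev)
  have "(\<Sum>k\<in>{v..<2 * v}. p (2 * v)) \<le> (\<Sum>k\<in>{v..<2 * v}. prob {\<omega>\<in>space M. K l \<omega> \<in> {k}})"
  proof (rule sum_mono)
    fix k assume k: "k \<in> {v..<2 * v}"
    have "prob {\<omega>\<in>space M. K l \<omega> \<in> {k}} = p k" using dist[of k l] k assms by (simp add: p_def)
    also have "p k \<ge> p (2 * v)" using k assms by (intro p_mono) auto
    finally show "p (2 * v) \<le> prob {\<omega>\<in>space M. K l \<omega> \<in> {k}}" .
  qed
  hence "real v * (p v / 4) \<le> prob ?T"
    using p_double'[OF assms(1)] eq by (simp add: order_trans[OF mult_left_mono])
  moreover have "prob {\<omega>\<in>space M. K l \<omega> \<in> S} + prob ?T = prob ({\<omega>\<in>space M. K l \<omega> \<in> S} \<union> ?T)"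
    using assms(2) by (subst finite_measure_Union) (auto simp: ev)
  moreover have "prob ({\<omega>\<in>space M. K l \<omega> \<in> S} \<union> ?T) \<le> 1" by (rule prob_le_1)
  ultimately show ?thesis by linarith
qed

lemma geom: assumes "0 < s" "s \<le> (1::real)" shows "(\<Sum>i<j. (1 - s)^i) \<le> 1 / s"
proof -
  have "(\<Sum>i<j. (1 - s)^i) = (1 - (1 - s)^j) / s" using assms by (simp add: sum_gp_strict)
  also have "\<dots> \<le> 1 / s" using assms by (intro divide_right_mono) auto
  finally show ?thesis .
qed

definition G :: "nat \<Rightarrow> nat \<Rightarrow> nat \<Rightarrow> 'a set" where
  "G v i j = {\<omega>\<in>space M. K i \<omega> = v \<and> K j \<omega> = v \<and> (\<forall>l<i. K l \<omega> < v)}"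

definition A :: "nat \<Rightarrow> 'a set" where
  "A v = {\<omega>\<in>space M. \<exists>j<v. \<exists>i<j. K i \<omega> = v \<and> K j \<omega> = v \<and> (\<forall>l<i. K l \<omega> < v)}"

lemma G_ev: "G v i j \<in> events"
  unfolding G_def by measurable

lemma A_ev: "A v \<in> events"
  unfolding A_def by measurable

lemma A_eq: "A v = (\<Union>j\<in>{..<v}. \<Union>i\<in>{..<j}. G v i j)"
  unfolding A_def G_def by auto

lemma G_prob: assumes "i < j" "v \<ge> 1"
  shows "prob (G v i j) \<le> p v * p v * (1 - real v * p v / 4) ^ i"
proof -
  define Ef where "Ef l = (if l = i \<or> l = j then {v} else {..<v})" for l
  have Efi: "Ef i = {v}" "Ef j = {v}" unfolding Ef_def by auto
  have Efl: "Ef l = {..<v}" if "l < i" for l using that assms unfolding Ef_def by auto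
  have "G v i j = {\<omega>\<in>space M. \<forall>l\<in>insert i (insert j {..<i}). K l \<omega> \<in> Ef l}"
    unfolding G_def using Efi Efl by auto
  hence "prob (G v i j) = (\<Prod>l\<in>insert i (insert j {..<i}). prob {\<omega>\<in>space M. K l \<omega> \<in> Ef l})"
    by (simp only:) (rule indep_prod, auto)
  also have "\<dots> = prob {\<omega>\<in>space M. K i \<omega> \<in> Ef i} * prob {\<omega>\<in>space M. K j \<omega> \<in> Ef j} *
        (\<Prod>l\<in>{..<i}. prob {\<omega>\<in>space M. K l \<omega> \<in> Ef l})"
    using assms by (simp add: prod.insert)
  also have "prob {\<omega>\<in>space M. K i \<omega> \<in> Ef i} = p v"
    unfolding Efi p_def using dist[of v i] assms by simp
  also have "prob {\<omega>\<in>space M. K j \<omega> \<in> Ef j} = p v"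
    unfolding Efi p_def using dist[of v j] assms by simp
  finally have eq: "prob (G v i j) = p v * p v * (\<Prod>l\<in>{..<i}. prob {\<omega>\<in>space M. K l \<omega> \<in> Ef l})" .
  have pr: "(\<Prod>l\<in>{..<i}. prob {\<omega>\<in>space M. K l \<omega> \<in> Ef l}) \<le> (\<Prod>l\<in>{..<i}. (1 - real v * p v / 4))"
  proof (rule prod_mono)
    fix l assume "l \<in> {..<i}"
    hence "Ef l = {..<v}" using Efl by auto
    moreover have "prob {\<omega>\<in>space M. K l \<omega> \<in> {..<v}} \<le> 1 - real v * p v / 4"
      by (rule tail) (use assms in auto)
    ultimately show "0 \<le> prob {\<omega>\<in>space M. K l \<omega> \<in> Ef l} \<and> prob {\<omega>\<in>space M. K l \<omega> \<in> Ef l} \<le> 1 - real v * p v / 4"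
      by simp
  qed
  have "p v * p v * (\<Prod>l\<in>{..<i}. prob {\<omega>\<in>space M. K l \<omega> \<in> Ef l}) \<le> p v * p v * (\<Prod>l\<in>{..<i}. (1 - real v * p v / 4))"
    using pr p_nonneg by (intro mult_left_mono) auto
  thus ?thesis unfolding eq by simp
qed

lemma A_prob: "prob (A v) \<le> 4 * p v"
proof (cases "v \<ge> 1")
  case False
  hence "A v = {}" unfolding A_def by auto
  thus ?thesis using p_nonneg by simp
next
  case True
  let ?s = "real v * p v / 4"
  have s1: "?s \<le> 1" using tail[of v "{}" 0] True by simp
  have s0: "0 < ?s" using p_pos[OF True] True by simp
  have "prob (A v) \<le> (\<Sum>j\<in>{..<v}. prob (\<Union>i\<in>{..<j}. G v i j))"
    unfolding A_eq by (rule finite_measure_subadditive_finite) (auto intro: G_ev)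
  also have "\<dots> \<le> (\<Sum>j\<in>{..<v}. \<Sum>i\<in>{..<j}. prob (G v i j))"
    by (intro sum_mono finite_measure_subadditive_finite) (auto intro: G_ev)
  also have "\<dots> \<le> (\<Sum>j\<in>{..<v}. \<Sum>i\<in>{..<j}. p v * p v * (1 - ?s) ^ i)"
    using True by (intro sum_mono G_prob) auto
  also have "\<dots> \<le> (\<Sum>j\<in>{..<v}. p v * p v * (1 / ?s))"
  proof (rule sum_mono)
    fix j
    have "(\<Sum>i\<in>{..<j}. p v * p v * (1 - ?s) ^ i) = p v * p v * (\<Sum>i<j. (1 - ?s) ^ i)"
      by (simp add: sum_distrib_left)
    also have "\<dots> \<le> p v * p v * (1 / ?s)"
      using geom[OF s0 s1, of j] p_nonneg by (intro mult_left_mono) auto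
    finally show "(\<Sum>i\<in>{..<j}. p v * p v * (1 - ?s) ^ i) \<le> p v * p v * (1 / ?s)" .
  qed
  also have "\<dots> = 4 * p v" using True p_pos[OF True] by simp
  finally show ?thesis .
qed

definition E :: "nat \<Rightarrow> 'a set" where
  "E v = {\<omega>\<in>space M. \<forall>n<v. K n \<omega> < 2 * v}"

lemma E_ev: "E v \<in> events"
  unfolding E_def by measurable

lemma alg: assumes "v \<ge> (1::nat)"
  shows "(real v ^ 2 * real v powr (-5/4)) ^ 2 = real v powr (3/2)"
proof -
  have v: "real v > 0" using assms by simp
  have "real v ^ 2 * real v powr (-5/4) = real v powr 2 * real v powr (-5/4)"
    using v by (simp add: powr_realpow)
  also have "\<dots> = real v powr (2 + (-5/4))" by (rule powr_add[symmetric])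
  also have "\<dots> = real v powr (3/4)" by simp
  finally have "(real v ^ 2 * real v powr (-5/4)) ^ 2 = real v powr (3/4) * real v powr (3/4)"
    by (simp add: power2_eq_square)
  also have "\<dots> = real v powr (3/4 + 3/4)" by (rule powr_add[symmetric])
  also have "\<dots> = real v powr (3/2)" by simp
  finally show ?thesis .
qed

lemma E_prob: assumes "v \<ge> 1"
  shows "prob (E v) \<le> 256 * zeta54^2 * real v powr (-3/2)"
proof -
  let ?s = "real (2 * v) * p (2 * v) / 4"
  let ?x = "real v * p v / 8"
  have "prob {\<omega>\<in>space M. K 0 \<omega> \<in> {}} \<le> 1 - ?s" by (rule tail) (use assms in auto)
  hence s0: "0 \<le> 1 - ?s" by simp
  have "p (2 * v) \<ge> p v / 4" using p_double'[OF assms] .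
  hence "real v * (p v / 4) \<le> real v * p (2 * v)" by (intro mult_left_mono) auto
  hence sx: "?x \<le> ?s" by (simp add: mult.commute)
  have x0: "0 \<le> 1 - ?x" using s0 sx by linarith
  have eqE: "E v = {\<omega>\<in>space M. \<forall>n\<in>{..<v}. K n \<omega> \<in> {..<2 * v}}" unfolding E_def by auto
  have "0 \<in> {..<v}" using assms by simp
  hence ne: "{..<v} \<noteq> {}" by blast
  have "prob (E v) = (\<Prod>n\<in>{..<v}. prob {\<omega>\<in>space M. K n \<omega> \<in> {..<2 * v}})"
    unfolding eqE by (rule indep_prod[OF _ ne]) simp
  also have "\<dots> \<le> (\<Prod>n\<in>{..<v}. 1 - ?s)"
  proof (rule prod_mono)
    fix n
    have "prob {\<omega>\<in>space M. K n \<omega> \<in> {..<2 * v}} \<le> 1 - real (2 * v) * p (2 * v) / 4"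
      by (rule tail) (use assms in auto)
    thus "0 \<le> prob {\<omega>\<in>space M. K n \<omega> \<in> {..<2 * v}} \<and> prob {\<omega>\<in>space M. K n \<omega> \<in> {..<2 * v}} \<le> 1 - ?s"
      by simp
  qed
  also have "\<dots> = (1 - ?s) ^ v" by simp
  also have "\<dots> \<le> (1 - ?x) ^ v"
    using s0 sx by (intro power_mono) auto
  also have "\<dots> \<le> exp (- ?x) ^ v"
    using x0 exp_ge_add_one_self[of "- ?x"] by (intro power_mono) auto
  also have "\<dots> = exp (real v * (- ?x))" by (rule exp_of_nat_mult[symmetric])
  also have "\<dots> = exp (- (?x * v))" by (simp only: mult.commute mult_minus_right)
  also have "\<dots> \<le> 4 / (?x * v)^2"
    using p_pos[OF assms] assms by (intro exp_bound) simp
  also have "4 / (?x * v)^2 = 256 * zeta54^2 / (real v ^ 2 * real v powr (-5/4)) ^ 2"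
  proof -
    have xv: "?x * real v = (real v ^ 2 * real v powr (-5/4)) / (8 * zeta54)"
      unfolding p_def by (simp add: power2_eq_square mult.commute mult.left_commute)
    have y: "real v ^ 2 * real v powr (-5/4) > 0" using assms by simp
    show ?thesis unfolding xv using zeta_pos y by (simp add: power_divide)
  qed
  also have "\<dots> = 256 * zeta54^2 * real v powr (-3/2)"
    unfolding alg[OF assms] using powr_minus_divide[of "real v" "3/2"] by simp
  finally show ?thesis .
qed

lemma AE_A: "AE \<omega> in M. eventually (\<lambda>v. \<omega> \<in> space M - A v) sequentially"
proof (rule borel_cantelli_AE1)
  show "\<And>n. A n \<in> events" by (rule A_ev)
  show "\<And>n. emeasure M (A n) < \<infinity>" by (simp add: emeasure_eq_measure)
  have "summable (\<lambda>n. real n powr (-5/4))" by (simp add: summable_real_powr_iff)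
  hence s: "summable (\<lambda>n. 4 * p n)" unfolding p_def by (intro summable_mult summable_divide)
  show "summable (\<lambda>n. prob (A n))"
    by (rule summable_comparison_test[OF _ s]) (auto intro: A_prob)
qed

lemma AE_E: "AE \<omega> in M. eventually (\<lambda>v. \<omega> \<in> space M - E v) sequentially"
proof (rule borel_cantelli_AE1)
  show "\<And>n. E n \<in> events" by (rule E_ev)
  show "\<And>n. emeasure M (E n) < \<infinity>" by (simp add: emeasure_eq_measure)
  have "summable (\<lambda>n. real n powr (-3/2))" by (simp add: summable_real_powr_iff)
  hence s: "summable (\<lambda>n. 256 * zeta54^2 * real n powr (-3/2))" by (intro summable_mult)
  show "summable (\<lambda>n. prob (E n))"
  proof (rule summable_comparison_test[OF _ s])
    have "\<forall>n\<ge>1. norm (prob (E n)) \<le> 256 * zeta54^2 * real n powr (-3/2)"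
      using E_prob by auto
    thus "\<exists>N. \<forall>n\<ge>N. norm (prob (E n)) \<le> 256 * zeta54^2 * real n powr (-3/2)" by blast
  qed
qed

lemma main:
  "AE \<omega> in M. \<exists>i0. (\<forall>i\<ge>i0. record_time (\<lambda>n. K n \<omega>) i
                                   \<longrightarrow> simple_record_time (\<lambda>n. K n \<omega>) i)
                          \<and> (\<forall>i\<ge>i0. Max ((\<lambda>n. K n \<omega>) ` {..<i}) > i)"
  using AE_A AE_E
proof eventually_elim
  case (elim \<omega>)
  from elim(1) obtain N2 where N2: "\<And>v. v \<ge> N2 \<Longrightarrow> \<omega> \<notin> A v" and sp: "\<omega> \<in> space M"
    unfolding eventually_sequentially by (metis DiffD1 DiffD2 order_refl)
  from elim(2) obtain N1 where N1: "\<And>v. v \<ge> N1 \<Longrightarrow> \<omega> \<notin> E v"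
    unfolding eventually_sequentially by blast
  let ?i0 = "Suc (max N1 N2)"
  have big: "\<exists>n<i. K n \<omega> \<ge> 2 * i" if "i \<ge> ?i0" for i
    using N1[of i] that sp unfolding E_def by (auto simp: not_less)
  show ?case
  proof (intro exI[of _ ?i0] conjI allI impI)
    fix i assume i: "i \<ge> ?i0"
    obtain n where n: "n < i" "K n \<omega> \<ge> 2 * i" using big[OF i] by blast
    have "K n \<omega> \<le> Max ((\<lambda>n. K n \<omega>) ` {..<i})" using n by (intro Max_ge) auto
    thus "Max ((\<lambda>n. K n \<omega>) ` {..<i}) > i" using n i by linarith
  next
    fix i assume i: "i \<ge> ?i0" and r: "record_time (\<lambda>n. K n \<omega>) i"
    show "simple_record_time (\<lambda>n. K n \<omega>) i"
      unfolding simple_record_time_def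
    proof (intro conjI r allI impI)
      fix j assume ij: "i < j" and nj: "nonstrict_record_time (\<lambda>n. K n \<omega>) j"
      show "K i \<omega> < K j \<omega>"
      proof (rule ccontr)
        assume "\<not> K i \<omega> < K j \<omega>"
        moreover have "K i \<omega> \<le> K j \<omega>" using nj ij unfolding nonstrict_record_time_def by auto
        ultimately have eq: "K j \<omega> = K i \<omega>" by simp
        obtain n where n: "n < j" "K n \<omega> \<ge> 2 * j" using big[of j] i ij by auto
        have "K n \<omega> \<le> K j \<omega>" using nj n unfolding nonstrict_record_time_def by auto
        hence jv: "j < K i \<omega>" using n eq ij by linarith
        have "\<omega> \<in> A (K i \<omega>)" unfolding A_def using sp jv ij eq r
          unfolding record_time_def by auto
        moreover have "K i \<omega> \<ge> N2" using jv ij i by linarith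
        ultimately show False using N2 by blast
      qed
    qed
  qed
qed

end

theorem mainTheorem5:
  fixes M :: "'a measure" and K :: "nat \<Rightarrow> 'a \<Rightarrow> nat"
  assumes "prob_space M"
    and "prob_space.indep_vars M (\<lambda>_. count_space UNIV) K UNIV"
    and "\<And>i k. k \<ge> 1 \<Longrightarrow>
           measure M {\<omega> \<in> space M. K i \<omega> = k} = real k powr (-5/4) / zeta54"
  shows "AE \<omega> in M. \<exists>i0. (\<forall>i\<ge>i0. record_time (\<lambda>n. K n \<omega>) i
                                   \<longrightarrow> simple_record_time (\<lambda>n. K n \<omega>) i)
                          \<and> (\<forall>i\<ge>i0. Max ((\<lambda>n. K n \<omega>) ` {..<i}) > i)"
proof -
  interpret recs M K
    using assms unfolding recs_def recs_axioms_def by auto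
  show ?thesis by (rule main)
qed

end
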